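(* Let $m \geq 1$ and let $d$ be a positive integer with $\gcd(d, 2^m-1)=1$. For $a \in \mathrm{GF}(2^m)$ define $$W_d(a) = \sum_{x \in \mathrm{GF}(2^m)} (-1)^{\mathrm{Tr}(x^d + a x)},$$ where $\mathrm{Tr}\colon \mathrm{GF}(2^m)\to\mathrm{GF}(2)$ is the absolute trace. Suppose that $W_d$ takes exactly three distinct values $A$, $B$, $C$ on $\mathrm{GF}(2^m)^*$, and let $N_C$ be the number of $a \in \mathrm{GF}(2^m)^*$ with $W_d(a) = C$. Let $V$ be the set of roots of $1 + x^d + (1+x)^d$ in $\mathrm{GF}(2^m)$. Then $$N_C = \frac{2^{2m} - 2^m(A+B) + (2^m-1)AB}{(C-A)(C-B)}$$ and $$2^{2m}|V| = 2^{2m}(A+B+C) - 2^m(AB+BC+CA) + (2^m-1)ABC.$$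
   Context: $W_d$ is the Walsh transform of the power map $x\mapsto x^d$ on $\mathrm{GF}(2^m)$. *)

theory Defs
  imports "HOL-Analysis.Analysis"
begin

text \<open>Absolute trace from GF(2^m) to GF(2), with values in the prime subfield {0,1} of the field.\<close>
definition abs_trace :: "nat \<Rightarrow> 'a::field \<Rightarrow> 'a" where
  "abs_trace m x = (\<Sum>i<m. x ^ (2 ^ i))"

definition add_char :: "nat \<Rightarrow> 'a::field \<Rightarrow> int" where
  "add_char m y = (if abs_trace m y = 0 then 1 else -1)"

definition walsh :: "nat \<Rightarrow> nat \<Rightarrow> 'a::{field,finite} \<Rightarrow> int" where
  "walsh m d a = (\<Sum>x\<in>UNIV. add_char m (x ^ d + a * x))"

end

theory Submission
  imports Defs "HOL-Computational_Algebra.Polynomial"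
begin

lemma two0: "CHAR('a::field) = 2 \<Longrightarrow> (2::'a) = 0"
  by (metis of_nat_CHAR of_nat_numeral)

lemma frob:
  assumes "CHAR('a::field) = 2"
  shows "((x::'a) + y) ^ (2 ^ i) = x ^ (2 ^ i) + y ^ (2 ^ i)"
proof (induction i)
  case 0 then show ?case by simp
next
  case (Suc i)
  have "(x + y) ^ (2 ^ Suc i) = ((x+y)^(2^i))^2" by (simp only: power_Suc2 power_mult)
  also have "\<dots> = (x ^ (2 ^ i))^2 + (y ^ (2 ^ i))^2 + 2 * x^(2^i) * y^(2^i)"
    unfolding Suc by (simp add: power2_eq_square algebra_simps)
  also have "\<dots> = (x ^ (2 ^ i))^2 + (y ^ (2 ^ i))^2" using two0[OF assms] by simp
  finally show ?case by (simp add: power_mult[symmetric] mult.commute)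
qed

lemma frob_sum:
  assumes "CHAR('a::field) = 2"
  shows "(sum (f::'b\<Rightarrow>'a) S) ^ 2 = sum (\<lambda>i. f i ^ 2) S"
proof (induction S rule: infinite_finite_induct)
  case (insert x F)
  then show ?case using frob[OF assms, of _ _ 1] by simp
qed auto

lemma trace_add:
  assumes "CHAR('a::field) = 2"
  shows "abs_trace m ((x::'a) + y) = abs_trace m x + abs_trace m y"
  unfolding abs_trace_def by (simp add: frob[OF assms] sum.distrib)

lemma fermat1:
  fixes x :: "'a::{field,finite}"
  assumes "x \<noteq> 0"
  shows "x ^ (CARD('a) - 1) = 1"
proof -
  let ?S = "UNIV - {0::'a}"
  have bij: "bij_betw (\<lambda>y. x * y) ?S ?S"
    by (rule bij_betwI[where g="\<lambda>y. y / x"]) (use assms in auto)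
  have "prod (\<lambda>y. x * y) ?S = prod (\<lambda>y. y) ?S"
    using prod.reindex_bij_betw[OF bij, of "\<lambda>y. y"] by simp
  moreover have "prod (\<lambda>y. x * y) ?S = x ^ card ?S * prod (\<lambda>y. y) ?S"
    by (simp add: prod.distrib)
  moreover have "prod (\<lambda>y. y) ?S \<noteq> 0" by (simp add: prod_zero_iff)
  moreover have "card ?S = CARD('a) - 1" by (simp add: card_Diff_singleton)
  ultimately show ?thesis by simp
qed

lemma fermat:
  fixes x :: "'a::{field,finite}"
  shows "x ^ CARD('a) = x"
proof (cases "x = 0")
  case True then show ?thesis by simp
next
  case False
  have "CARD('a) = Suc (CARD('a) - 1)" using finite_UNIV_card_ge_0[where 'a='a] by simp
  then have "x ^ CARD('a) = x * x ^ (CARD('a) - 1)" by (metis power_Suc)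
  then show ?thesis using fermat1[OF False] by simp
qed

lemma trace_01:
  assumes "CHAR('a::{field,finite}) = 2" "CARD('a) = 2 ^ m" "m \<ge> 1"
  shows "abs_trace m (x::'a) = 0 \<or> abs_trace m x = 1"
proof -
  obtain n where m: "m = Suc n" using assms(3) by (cases m) auto
  have "(abs_trace m x)^2 = (\<Sum>i<m. x ^ (2 ^ Suc i))"
    unfolding abs_trace_def frob_sum[OF assms(1)] by (simp add: power_mult[symmetric] mult.commute)
  also have "\<dots> = abs_trace m x"
  proof -
    have "(\<Sum>i<Suc m. x ^ (2 ^ i)) = x ^ (2^0) + (\<Sum>i<m. x ^ (2 ^ Suc i))"
      by (rule sum.lessThan_Suc_shift)
    moreover have "(\<Sum>i<Suc m. x ^ (2 ^ i)) = abs_trace m x + x ^ (2 ^ m)"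
      by (simp add: abs_trace_def)
    moreover have "x ^ (2 ^ m) = x" using fermat[of x] assms(2) by simp
    ultimately show ?thesis by simp
  qed
  finally have "(abs_trace m x)^2 = abs_trace m x" .
  then have "abs_trace m x * (abs_trace m x - 1) = 0" by (simp add: power2_eq_square algebra_simps)
  then show ?thesis by auto
qed

lemma char_mult:
  assumes "CHAR('a::{field,finite}) = 2" "CARD('a) = 2 ^ m" "m \<ge> 1"
  shows "add_char m ((x::'a) + y) = add_char m x * add_char m y"
  using trace_01[OF assms, of x] trace_01[OF assms, of y] two0[OF assms(1)]
  unfolding add_char_def trace_add[OF assms(1)] by auto

lemma trace_nonzero:
  assumes "CHAR('a::{field,finite}) = 2" "CARD('a) = 2 ^ m" "m \<ge> 1"
  shows "\<exists>x::'a. abs_trace m x \<noteq> 0"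
proof (rule ccontr)
  assume "\<not> ?thesis"
  then have all: "\<And>x::'a. abs_trace m x = 0" by auto
  define p :: "'a poly" where "p = (\<Sum>i<m. monom 1 (2^i))"
  have ev: "poly p x = abs_trace m x" for x
    by (simp add: p_def poly_sum poly_monom abs_trace_def)
  have "coeff p (2^(m-1)) = (\<Sum>i<m. if i = m - 1 then 1 else 0)"
    unfolding p_def coeff_sum coeff_monom by (intro sum.cong) auto
  also have "\<dots> = 1" using assms(3) by simp
  finally have "p \<noteq> 0" by auto
  have deg: "degree p \<le> 2^(m-1)"
    unfolding p_def
    by (rule degree_sum_le) (auto intro: order.trans[OF degree_monom_le] power_increasing)
  have "card {x. poly p x = 0} \<le> degree p" by (rule card_poly_roots_bound[OF \<open>p \<noteq> 0\<close>])
  moreover have "{x. poly p x = 0} = UNIV" using ev all by auto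
  ultimately have "CARD('a) \<le> degree p" by simp
  moreover have "(2::nat)^(m-1) < 2^m" using assms(3) by simp
  ultimately show False using deg assms(2) by linarith
qed


lemma char0: "add_char m (0::'a::field) = 1"
  by (simp add: add_char_def abs_trace_def power_0_left)

context
  fixes m :: nat
  assumes c2: "CHAR('a::{field,finite}) = 2" and cq: "CARD('a) = 2 ^ m" and m1: "m \<ge> 1"
begin

lemma cm: "add_char m ((x::'a) + y) = add_char m x * add_char m y"
  by (rule char_mult[OF c2 cq m1])

lemma char_sum_zero: "(\<Sum>x\<in>UNIV. add_char m (x::'a)) = 0"
proof -
  obtain x0 :: 'a where "abs_trace m x0 \<noteq> 0" using trace_nonzero[OF c2 cq m1] by auto
  then have x0: "add_char m x0 = -1" by (simp add: add_char_def)
  have bij: "bij_betw (\<lambda>x. x + x0) UNIV (UNIV::'a set)"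
    by (rule bij_betwI[where g="\<lambda>x. x - x0"]) auto
  have "(\<Sum>x\<in>UNIV. add_char m (x::'a)) = (\<Sum>x\<in>UNIV. add_char m (x + x0))"
    using sum.reindex_bij_betw[OF bij, of "add_char m"] by simp
  also have "\<dots> = - (\<Sum>x\<in>UNIV. add_char m (x::'a))"
    by (simp add: cm x0 sum_negf)
  finally show ?thesis by simp
qed

lemma orth: "(\<Sum>a\<in>UNIV. add_char m (a * (u::'a))) = (if u = 0 then int CARD('a) else 0)"
proof (cases "u = 0")
  case True then show ?thesis by (simp add: char0)
next
  case False
  have bij: "bij_betw (\<lambda>x. x * u) UNIV (UNIV::'a set)"
    by (rule bij_betwI[where g="\<lambda>x. x / u"]) (use False in auto)
  show ?thesis
    using sum.reindex_bij_betw[OF bij, of "add_char m"] char_sum_zero False by simp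
qed

lemma pow_bij:
  assumes "d > 0" "coprime d (2 ^ m - 1)"
  shows "bij (\<lambda>x::'a. x ^ d)"
proof -
  obtain e k where ek: "d * e = (2^m - 1) * k + gcd d (2^m - 1)"
    using bezout_nat[of d "2^m-1"] assms(1) by auto
  then have ek: "d * e = (CARD('a) - 1) * k + 1" using assms(2) cq by (simp add: coprime_iff_gcd_eq_1)
  have inv: "(x ^ d) ^ e = x" for x :: 'a
  proof (cases "x = 0")
    case True
    have "d * e \<noteq> 0" using ek by simp
    then show ?thesis using True by (simp add: power_mult[symmetric])
  next
    case False
    have "(x ^ d) ^ e = (x ^ (CARD('a) - 1)) ^ k * x"
      by (simp add: power_mult[symmetric] ek power_add)
    then show ?thesis using fermat1[OF False] by simp
  qed
  have "inj (\<lambda>x::'a. x ^ d)" by (metis inv injI)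
  then show ?thesis using finite_UNIV_inj_surj[of "\<lambda>x::'a. x ^ d"] by (simp add: bij_def)
qed

lemma sum_pow:
  assumes "d > 0" "coprime d (2 ^ m - 1)"
  shows "(\<Sum>x\<in>UNIV. g ((x::'a) ^ d)) = (\<Sum>x\<in>UNIV. g x)"
  using sum.reindex_bij_betw[OF pow_bij[OF assms], of g] by simp

end


context
  fixes m d :: nat
  assumes c2: "CHAR('a::{field,finite}) = 2" and cq: "CARD('a) = 2 ^ m" and m1: "m \<ge> 1"
    and d0: "d > 0" and cop: "coprime d (2 ^ m - 1)"
begin

abbreviation "ch \<equiv> add_char m :: 'a \<Rightarrow> int"
abbreviation "WW \<equiv> walsh m d :: 'a \<Rightarrow> int"

lemma cm': "ch (x + y) = ch x * ch y"
  by (rule char_mult[OF c2 cq m1])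

lemma W0: "WW 0 = 0"
  unfolding walsh_def using sum_pow[OF c2 cq m1 d0 cop, of ch] char_sum_zero[OF c2 cq m1] by simp

lemma W_exp: "WW a = (\<Sum>x\<in>UNIV. ch (x ^ d) * ch (a * x))"
  unfolding walsh_def by (simp add: cm')

lemma M1: "(\<Sum>a\<in>UNIV. WW a) = int CARD('a)"
proof -
  have "(\<Sum>a\<in>UNIV. WW a) = (\<Sum>x\<in>UNIV. \<Sum>a\<in>UNIV. ch (x ^ d) * ch (a * x))"
    unfolding W_exp by (rule sum.swap)
  also have "\<dots> = (\<Sum>x\<in>UNIV. ch (x ^ d) * (if x = 0 then int CARD('a) else 0))"
    by (simp add: sum_distrib_left[symmetric] orth[OF c2 cq m1])
  also have "\<dots> = int CARD('a)"
    using d0 by (simp add: char0 if_distrib zero_power cong: if_cong)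
  finally show ?thesis .
qed

lemma neg_eq: "(u::'a) + v = 0 \<longleftrightarrow> v = u"
  by (metis add_eq_0_iff uminus_CHAR_2[OF c2])

lemma xx: "(u::'a) + u = 0"
  using neg_eq[of u u] by simp

lemma M2: "(\<Sum>a\<in>UNIV. WW a ^ 2) = int CARD('a) ^ 2"
proof -
  have pt: "WW a ^ 2 = (\<Sum>x\<in>UNIV. \<Sum>y\<in>UNIV. ch (x^d + y^d) * ch (a * (x + y)))" for a
    unfolding power2_eq_square W_exp sum_product
    by (intro sum.cong refl) (simp add: cm' algebra_simps)
  have "(\<Sum>a\<in>UNIV. WW a ^ 2) = (\<Sum>x\<in>UNIV. \<Sum>a\<in>UNIV. \<Sum>y\<in>UNIV. ch (x^d + y^d) * ch (a * (x + y)))"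
    unfolding pt by (rule sum.swap)
  also have "\<dots> = (\<Sum>x\<in>UNIV. \<Sum>y\<in>UNIV. \<Sum>a\<in>UNIV. ch (x^d + y^d) * ch (a * (x + y)))"
    by (intro sum.cong refl sum.swap)
  also have "\<dots> = (\<Sum>x\<in>UNIV. \<Sum>y\<in>UNIV. ch (x^d + y^d) * (if y = x then int CARD('a) else 0))"
    by (simp add: sum_distrib_left[symmetric] orth[OF c2 cq m1] neg_eq)
  also have "\<dots> = (\<Sum>x::'a\<in>UNIV. int CARD('a))"
    by (simp add: if_distrib xx char0 cong: if_cong)
  also have "\<dots> = int CARD('a) ^ 2" by (simp add: power2_eq_square)
  finally show ?thesis .
qed


lemma M3: "(\<Sum>a\<in>UNIV. WW a ^ 3) = int CARD('a) * (\<Sum>x\<in>UNIV. \<Sum>y\<in>UNIV. ch (x^d + y^d + (x+y)^d))"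
proof -
  have pt: "WW a ^ 3 = (\<Sum>x\<in>UNIV. \<Sum>y\<in>UNIV. \<Sum>z\<in>UNIV. ch (x^d + y^d + z^d) * ch (a * (x + y + z)))" for a
  proof -
    have "WW a ^ 3 = WW a * (WW a * WW a)" by (simp add: power3_eq_cube)
    also have "\<dots> = (\<Sum>x\<in>UNIV. \<Sum>y\<in>UNIV. \<Sum>z\<in>UNIV. (ch (x ^ d) * ch (a * x)) * ((ch (y ^ d) * ch (a * y)) * (ch (z ^ d) * ch (a * z))))"
      by (simp only: W_exp sum_product, simp only: sum_distrib_left)
    also have "\<dots> = (\<Sum>x\<in>UNIV. \<Sum>y\<in>UNIV. \<Sum>z\<in>UNIV. ch (x^d + y^d + z^d) * ch (a * (x + y + z)))"
      by (intro sum.cong refl) (simp add: cm' algebra_simps)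
    finally show ?thesis .
  qed
  have "(\<Sum>a\<in>UNIV. WW a ^ 3) = (\<Sum>x\<in>UNIV. \<Sum>a\<in>UNIV. \<Sum>y\<in>UNIV. \<Sum>z\<in>UNIV. ch (x^d + y^d + z^d) * ch (a * (x + y + z)))"
    unfolding pt by (rule sum.swap)
  also have "\<dots> = (\<Sum>x\<in>UNIV. \<Sum>y\<in>UNIV. \<Sum>a\<in>UNIV. \<Sum>z\<in>UNIV. ch (x^d + y^d + z^d) * ch (a * (x + y + z)))"
    by (intro sum.cong refl sum.swap)
  also have "\<dots> = (\<Sum>x\<in>UNIV. \<Sum>y\<in>UNIV. \<Sum>z\<in>UNIV. \<Sum>a\<in>UNIV. ch (x^d + y^d + z^d) * ch (a * (x + y + z)))"
    by (intro sum.cong refl sum.swap)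
  also have "\<dots> = (\<Sum>x\<in>UNIV. \<Sum>y\<in>UNIV. \<Sum>z\<in>UNIV. ch (x^d + y^d + z^d) * (if z = x + y then int CARD('a) else 0))"
    by (simp add: sum_distrib_left[symmetric] orth[OF c2 cq m1] neg_eq)
  also have "\<dots> = (\<Sum>x\<in>UNIV. \<Sum>y\<in>UNIV. ch (x^d + y^d + (x+y)^d) * int CARD('a))"
    by (simp add: if_distrib cong: if_cong)
  also have "\<dots> = int CARD('a) * (\<Sum>x\<in>UNIV. \<Sum>y\<in>UNIV. ch (x^d + y^d + (x+y)^d))"
    by (simp add: sum_distrib_left sum_distrib_right mult.commute)
  finally show ?thesis .
qed

lemma sum_if_const: "(\<Sum>t\<in>(UNIV::'b::finite set). if P t then (k::int) else 0) = int (card {t. P t}) * k"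
  by (simp add: sum.If_cases)

lemma Tval: "(\<Sum>x\<in>UNIV. \<Sum>y\<in>UNIV. ch (x^d + y^d + (x+y)^d)) = int CARD('a) * int (card {t::'a. 1 + t^d + (1+t)^d = 0})"
proof -
  define c where "c t = 1 + t^d + (1+t)^d" for t :: 'a
  define g where "g x = (\<Sum>y\<in>UNIV. ch (x^d + y^d + (x+y)^d))" for x :: 'a
  let ?S = "UNIV - {0::'a}"
  have g0: "g 0 = int CARD('a)" unfolding g_def using d0 by (simp add: zero_power xx char0)
  have gx: "g x = (\<Sum>t\<in>UNIV. ch (x^d * c t))" if "x \<noteq> 0" for x
  proof -
    have bij: "bij_betw (\<lambda>t. x * t) UNIV (UNIV::'a set)"
      by (rule bij_betwI[where g="\<lambda>t. t / x"]) (use that in auto)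
    have "g x = (\<Sum>t\<in>UNIV. ch (x^d + (x*t)^d + (x+x*t)^d))"
      unfolding g_def using sum.reindex_bij_betw[OF bij, of "\<lambda>y. ch (x^d + y^d + (x+y)^d)"] by simp
    also have "\<dots> = (\<Sum>t\<in>UNIV. ch (x^d * c t))"
    proof (intro sum.cong refl)
      fix t
      have "x + x * t = x * (1 + t)" by (simp add: algebra_simps)
      then have e: "(x+x*t)^d = x^d * (1+t)^d" by (simp add: power_mult_distrib)
      show "ch (x^d + (x*t)^d + (x+x*t)^d) = ch (x^d * c t)"
        unfolding e by (simp add: c_def power_mult_distrib algebra_simps)
    qed
    finally show ?thesis .
  qed
  have inner: "(\<Sum>x\<in>?S. ch (x^d * e)) = (if e = 0 then int CARD('a) else 0) - 1" for e
  proof -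
    have "(\<Sum>x\<in>UNIV. ch (x^d * e)) = ch (0^d * e) + (\<Sum>x\<in>?S. ch (x^d * e))"
      by (rule sum.remove) auto
    moreover have "(\<Sum>x\<in>UNIV. ch (x^d * e)) = (\<Sum>x\<in>UNIV. ch (x * e))"
      by (rule sum_pow[OF c2 cq m1 d0 cop])
    moreover have "(\<Sum>x\<in>UNIV. ch (x * e)) = (if e = 0 then int CARD('a) else 0)"
      by (rule orth[OF c2 cq m1])
    ultimately show ?thesis using d0 by (simp add: zero_power char0)
  qed
  have "(\<Sum>x\<in>UNIV. g x) = g 0 + (\<Sum>x\<in>?S. g x)"
    by (rule sum.remove) auto
  also have "(\<Sum>x\<in>?S. g x) = (\<Sum>x\<in>?S. \<Sum>t\<in>UNIV. ch (x^d * c t))"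
    by (rule sum.cong) (auto simp: gx)
  also have "\<dots> = (\<Sum>t\<in>UNIV. \<Sum>x\<in>?S. ch (x^d * c t))"
    by (rule sum.swap)
  also have "\<dots> = (\<Sum>t\<in>UNIV. (if c t = 0 then int CARD('a) else 0) - 1)"
    by (simp add: inner)
  also have "\<dots> = int (card {t. c t = 0}) * int CARD('a) - int CARD('a)"
    by (simp add: sum_subtractf sum_if_const)
  finally have "(\<Sum>x\<in>UNIV. g x) = int CARD('a) * int (card {t. c t = 0})"
    unfolding g0 by (simp add: algebra_simps)
  then show ?thesis by (simp add: g_def c_def)
qed

end


theorem proposition8:
  fixes m d :: nat and A B C :: int
  assumes "CHAR('a::{field,finite}) = 2"
    and "CARD('a) = 2 ^ m"
    and "m \<ge> 1"
    and "d > 0"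
    and "coprime d (2 ^ m - 1)"
    and "A \<noteq> B" "B \<noteq> C" "A \<noteq> C"
    and "(walsh m d :: 'a \<Rightarrow> int) ` (UNIV - {0}) = {A, B, C}"
  shows "real (card {a :: 'a. a \<noteq> 0 \<and> walsh m d a = C})
           = (2 ^ (2 * m) - 2 ^ m * real_of_int (A + B) + (2 ^ m - 1) * real_of_int (A * B))
             / real_of_int ((C - A) * (C - B))
         \<and> 2 ^ (2 * m) * int (card {x :: 'a. 1 + x ^ d + (1 + x) ^ d = 0})
           = 2 ^ (2 * m) * (A + B + C) - 2 ^ m * (A * B + B * C + C * A) + (2 ^ m - 1) * A * B * C"
proof -
  note hyp = assms(1-5)
  define W where "W = (walsh m d :: 'a \<Rightarrow> int)"
  define q :: int where "q = 2 ^ m"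
  have qc: "int CARD('a) = q" using assms(2) by (simp add: q_def)
  let ?S = "UNIV - {0::'a}"
  define V where "V = card {x :: 'a. 1 + x ^ d + (1 + x) ^ d = 0}"
  have W0': "W 0 = 0" unfolding W_def by (rule W0[OF hyp])
  have sk: "(\<Sum>a\<in>?S. W a ^ k) = (\<Sum>a\<in>UNIV. W a ^ k)" if "k > 0" for k
  proof -
    have "(\<Sum>a\<in>UNIV. W a ^ k) = W 0 ^ k + (\<Sum>a\<in>?S. W a ^ k)" by (rule sum.remove) auto
    then show ?thesis using W0' that by simp
  qed
  have S1: "(\<Sum>a\<in>?S. W a) = q" using sk[of 1] M1[OF hyp] qc by (simp add: W_def)
  have S2: "(\<Sum>a\<in>?S. W a ^ 2) = q ^ 2" using sk[of 2] M2[OF hyp] qc by (simp add: W_def)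
  have S3: "(\<Sum>a\<in>?S. W a ^ 3) = q * q * int V"
    using sk[of 3] M3[OF hyp] Tval[OF hyp] qc by (simp add: W_def V_def)
  have cardS: "card ?S = CARD('a) - 1" by (simp add: card_Diff_singleton)
  have cS: "int (card ?S) = q - 1" using cardS qc finite_UNIV_card_ge_0[where 'a='a] by (simp add: of_nat_diff)
  have vals: "W a \<in> {A, B, C}" if "a \<in> ?S" for a using assms(9) that unfolding W_def by blast
  have E1a: "(\<Sum>a\<in>?S. (W a - A) * (W a - B)) = q ^ 2 - (A + B) * q + A * B * (q - 1)"
  proof -
    have "(\<Sum>a\<in>?S. (W a - A) * (W a - B)) = (\<Sum>a\<in>?S. W a ^ 2 - (A + B) * W a + A * B)"
      by (intro sum.cong refl) (simp add: power2_eq_square algebra_simps)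
    also have "\<dots> = (\<Sum>a\<in>?S. W a ^ 2) - (A + B) * (\<Sum>a\<in>?S. W a) + A * B * int (card ?S)"
      by (simp add: sum.distrib sum_subtractf sum_distrib_left)
    finally show ?thesis using S1 S2 cS by simp
  qed
  have E1b: "(\<Sum>a\<in>?S. (W a - A) * (W a - B)) = int (card {a :: 'a. a \<noteq> 0 \<and> W a = C}) * ((C - A) * (C - B))"
  proof -
    have "(\<Sum>a\<in>?S. (W a - A) * (W a - B)) = (\<Sum>a\<in>?S. if W a = C then (C - A) * (C - B) else 0)"
      by (intro sum.cong refl) (use vals in auto)
    also have "\<dots> = (\<Sum>a\<in>{a\<in>?S. W a = C}. (C - A) * (C - B))"
      by (rule sum.inter_filter[symmetric]) simp
    also have "{a\<in>?S. W a = C} = {a :: 'a. a \<noteq> 0 \<and> W a = C}" by auto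
    finally show ?thesis by simp
  qed
  have E2: "0 = q * q * int V - (A + B + C) * q ^ 2 + (A * B + B * C + C * A) * q - A * B * C * (q - 1)"
  proof -
    have "0 = (\<Sum>a\<in>?S. (W a - A) * (W a - B) * (W a - C))"
      by (rule sum.neutral[symmetric]) (use vals in auto)
    also have "\<dots> = (\<Sum>a\<in>?S. W a ^ 3 - (A + B + C) * W a ^ 2 + (A * B + B * C + C * A) * W a - A * B * C)"
      by (intro sum.cong refl) (simp add: power2_eq_square power3_eq_cube algebra_simps)
    also have "\<dots> = (\<Sum>a\<in>?S. W a ^ 3) - (A + B + C) * (\<Sum>a\<in>?S. W a ^ 2) + (A * B + B * C + C * A) * (\<Sum>a\<in>?S. W a) - A * B * C * int (card ?S)"
      by (simp add: sum.distrib sum_subtractf sum_distrib_left)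
    finally show ?thesis using S1 S2 S3 cS by simp
  qed
  have q2: "(2::int) ^ (2 * m) = q ^ 2" by (simp add: q_def power_mult mult.commute)
  have ne: "(C - A) * (C - B) \<noteq> 0" using assms(7,8) by simp
  have N: "int (card {a :: 'a. a \<noteq> 0 \<and> W a = C}) * ((C - A) * (C - B)) = q ^ 2 - (A + B) * q + A * B * (q - 1)"
    using E1a E1b by simp
  have part1: "real (card {a :: 'a. a \<noteq> 0 \<and> walsh m d a = C})
           = (2 ^ (2 * m) - 2 ^ m * real_of_int (A + B) + (2 ^ m - 1) * real_of_int (A * B))
             / real_of_int ((C - A) * (C - B))"
  proof -
    have "real_of_int (int (card {a :: 'a. a \<noteq> 0 \<and> W a = C}) * ((C - A) * (C - B)))
       = real_of_int (q ^ 2 - (A + B) * q + A * B * (q - 1))" using N by simp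
    then have P: "real (card {a :: 'a. a \<noteq> 0 \<and> W a = C}) * real_of_int ((C - A) * (C - B))
       = 2 ^ (2 * m) - 2 ^ m * real_of_int (A + B) + (2 ^ m - 1) * real_of_int (A * B)"
      by (simp add: q_def power_mult[symmetric] mult.commute algebra_simps)
    moreover have ne': "real_of_int ((C - A) * (C - B)) \<noteq> 0" by (metis ne of_int_eq_0_iff)
    show ?thesis using eq_divide_imp[OF ne' P] unfolding W_def .
  qed
  have part2: "2 ^ (2 * m) * int (card {x :: 'a. 1 + x ^ d + (1 + x) ^ d = 0})
           = 2 ^ (2 * m) * (A + B + C) - 2 ^ m * (A * B + B * C + C * A) + (2 ^ m - 1) * A * B * C"
    unfolding q2 V_def[symmetric] q_def[symmetric] using E2 by (simp add: power2_eq_square algebra_simps)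
  show ?thesis using part1 part2 by simp
qed

end
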